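(* Let $k,n\in\mathbb{N}$ and $m\in\mathbb{N}_0$ with $n+1>k>m\ge 0$. Then \[ \frac{1}{n!}\int_0^\infty \frac{x^n e^{mx}}{(e^{x}-1)^{k}}\,dx=\sum_{i=0}^{k-1} q_{k,i}(k-m)\,\zeta(n+1-i), \] where $\zeta$ is the Riemann zeta function.
   Context: $S_N^{(l)}$ denotes the (signed) Stirling numbers of the first kind, defined by $x(x-1)\cdots(x-N+1)=\sum_{l=0}^{N}S_N^{(l)}x^l$. For $N\in\mathbb{N}$, $0\le j\le N-1$ and $a\in\mathbb{R}$, the coefficients are \[ q_{N,j}(a)=\frac{1}{(N-1)!}\sum_{l=j}^{N-1}(-1)^{N+l-1}\binom{l}{j}S_{N-1}^{(l)}(1-a)^{l-j}. \] *)

theory Defs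
  imports "HOL-Analysis.Analysis" "HOL-Combinatorics.Stirling"
begin

text \<open>Signed Stirling numbers of the first kind S_N^(l), characterised by
  x(x-1)...(x-N+1) = sum_l S_N^(l) x^l; obtained from the library's unsigned
  numbers (rising factorial coefficients) by the sign (-1)^(N+l).\<close>
definition signed_stirling :: "nat \<Rightarrow> nat \<Rightarrow> real" where
  "signed_stirling N l = (-1) ^ (N + l) * real (stirling N l)"

definition q_coeff :: "nat \<Rightarrow> nat \<Rightarrow> real \<Rightarrow> real" where
  "q_coeff N j a = (1 / fact (N - 1)) *
     (\<Sum>l = j..N - 1. (-1) ^ (N + l - 1) * real (l choose j)
        * signed_stirling (N - 1) l * (1 - a) ^ (l - j))"

text \<open>Riemann zeta function on the half-line s > 1 (Dirichlet series).\<close>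
definition riemann_zeta :: "real \<Rightarrow> real" where
  "riemann_zeta s = (\<Sum>j. 1 / (real (Suc j)) powr s)"

end

theory Submission
  imports Defs "HOL-Probability.Distributions"
begin


lemma polyA:
  fixes k :: nat and a y :: real
  assumes "k \<ge> 1"
  shows "pochhammer (y - a + 1) (k-1) / fact (k-1) = (\<Sum>i = 0..k-1. q_coeff k i a * y^i)"
proof -
  define N where "N = k - 1"
  have kN: "k = Suc N" using assms N_def by simp
  have sgn: "(-1::real) ^ (k + l - 1) * ((-1) ^ (N + l)) = 1" for l
    by (simp add: kN flip: power_add)
  have q: "q_coeff k i a = (1 / fact N) * (\<Sum>l\<le>N. (if i \<le> l then real (l choose i) * real (stirling N l) * (1 - a) ^ (l - i) else 0))" for i
  proof -
    have "q_coeff k i a = (1 / fact N) * (\<Sum>l = i..N. real (l choose i) * real (stirling N l) * (1 - a) ^ (l - i))"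
      unfolding q_coeff_def signed_stirling_def N_def[symmetric]
      apply (intro arg_cong[where f="\<lambda>x. _ * x"] sum.cong refl)
      subgoal for l
      proof -
        have "(-1::real)^(k+l-1) * real (l choose i) * ((-1)^(N+l) * real (stirling N l)) * (1-a)^(l-i) = ((-1)^(k+l-1) * (-1)^(N+l)) * (real (l choose i) * real (stirling N l) * (1-a)^(l-i))"
          by (simp only: mult_ac)
        then show ?thesis by (simp only: sgn mult_1_left)
      qed
      done
    also have "(\<Sum>l = i..N. real (l choose i) * real (stirling N l) * (1 - a) ^ (l - i)) = (\<Sum>l\<le>N. (if i \<le> l then real (l choose i) * real (stirling N l) * (1 - a) ^ (l - i) else 0))"
      by (rule sum.mono_neutral_cong_left) auto
    finally show ?thesis .
  qed
  have "(\<Sum>i = 0..k-1. q_coeff k i a * y^i) = (1 / fact N) * (\<Sum>i\<le>N. \<Sum>l\<le>N. (if i \<le> l then real (l choose i) * real (stirling N l) * (1 - a) ^ (l - i) * y ^ i else 0))"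
    unfolding q N_def[symmetric] atLeast0AtMost sum_distrib_left
    by (intro sum.cong refl) (simp add: sum_distrib_right sum_distrib_left; intro sum.cong refl; simp)
  also have "\<dots> = (1 / fact N) * (\<Sum>l\<le>N. real (stirling N l) * (\<Sum>i\<le>l. real (l choose i) * y ^ i * (1 - a) ^ (l - i)))"
    apply (subst sum.swap)
    apply (intro arg_cong[where f="\<lambda>x. _ * x"] sum.cong refl)
    apply (simp add: sum_distrib_left)
    apply (rule sum.mono_neutral_cong_right) apply (auto simp: mult_ac)
    done
  also have "\<dots> = (1 / fact N) * (\<Sum>l\<le>N. real (stirling N l) * (y + (1 - a)) ^ l)"
    by (simp add: binomial_ring)
  also have "\<dots> = pochhammer (y - a + 1) N / fact N"
    by (subst stirling_pochhammer[symmetric]) (simp add: algebra_simps)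
  finally show ?thesis by (simp add: N_def)
qed



lemma poch_ratio:
  fixes k j :: nat assumes "k \<ge> 1"
  shows "pochhammer (real k) j / fact j = pochhammer (real j + 1) (k-1) / (fact (k-1) :: real)"
proof -
  have "pochhammer (1::real) (j + (k-1)) = pochhammer 1 j * pochhammer (1 + real j) (k-1)"
    by (rule pochhammer_product')
  moreover have "pochhammer (1::real) ((k-1) + j) = pochhammer 1 (k-1) * pochhammer (1 + real (k-1)) j"
    by (rule pochhammer_product')
  moreover have "1 + real (k-1) = real k" using assms by simp
  ultimately have "fact j * pochhammer (real j + 1) (k-1) = fact (k-1) * pochhammer (real k) j"
    by (simp add: pochhammer_fact add.commute)
  then show ?thesis by (simp add: field_simps)
qed

lemma seriesC:
  fixes k a' :: nat and z :: real
  assumes "1 \<le> a'" "a' \<le> k" "0 < z" "z < 1"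
  shows "(\<lambda>j. pochhammer (real (j+1) - real a' + 1) (k-1) / fact (k-1) * z^(j+1)) sums (z^a' / (1-z)^k)"
proof -
  have k1: "k \<ge> 1" using assms by simp
  have "(\<lambda>j. ((- real k) gchoose j) * (-z)^j) sums (1 + (-z)) powr (- real k)"
    by (rule gen_binomial_real) (use assms in simp)
  also have "(1 + (-z)) powr (- real k) = 1 / (1-z)^k"
    using assms by (simp add: powr_minus powr_realpow divide_inverse)
  also have "(\<lambda>j. ((- real k) gchoose j) * (-z)^j) = (\<lambda>j. pochhammer (real j + 1) (k-1) / fact (k-1) * z^j)"
  proof
    fix j
    have "((- real k) gchoose j) * (-z)^j = pochhammer (real k) j / fact j * z^j"
      proof -
        have m: "(-1::real)^j * (-1)^j = 1" by (simp flip: power_add)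
        have "((- real k) gchoose j) * (-z)^j = ((-1)^j * (-1)^j) * (pochhammer (real k) j / fact j * z^j)"
          by (simp only: gbinomial_pochhammer power_minus[of z] minus_minus mult_ac times_divide_eq_left times_divide_eq_right)
        then show ?thesis by (simp only: m mult_1_left)
      qed
    also have "\<dots> = pochhammer (real j + 1) (k-1) / fact (k-1) * z^j"
      using poch_ratio[OF k1] by simp
    finally show "((- real k) gchoose j) * (-z)^j = pochhammer (real j + 1) (k-1) / fact (k-1) * z^j" .
  qed
  finally have s1: "(\<lambda>j. z^a' * (pochhammer (real j + 1) (k-1) / fact (k-1) * z^j)) sums (z^a' * (1 / (1-z)^k))"
    by (rule sums_mult)
  define g where "g = (\<lambda>j. pochhammer (real (j+1) - real a' + 1) (k-1) / fact (k-1) * z^(j+1))" 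
  have "(\<lambda>j. g (j + (a'-1))) = (\<lambda>j. z^a' * (pochhammer (real j + 1) (k-1) / fact (k-1) * z^j))"
  proof
    fix j
    have e1: "real (j + (a'-1) + 1) - real a' + 1 = real j + 1" using assms by simp
    have e2: "j + (a'-1) + 1 = a' + j" using assms by simp
    show "g (j + (a'-1)) = z^a' * (pochhammer (real j + 1) (k-1) / fact (k-1) * z^j)"
      unfolding g_def e1 e2 by (simp add: power_add)
  qed
  with s1 have s2: "(\<lambda>j. g (j + (a'-1))) sums (z^a' / (1-z)^k)" by simp
  have z0: "(\<Sum>i<a'-1. g i) = 0"
  proof (intro sum.neutral ballI)
    fix i assume "i \<in> {..<a'-1}"
    then have i: "i + 2 \<le> a'" by auto
    have "real (i+1) - real a' + 1 = - real (a' - 2 - i)" using i by simp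
    moreover have "a' - 2 - i < k - 1" using i assms by simp
    ultimately have "pochhammer (real (i+1) - real a' + 1) (k-1) = 0"
      by (subst pochhammer_eq_0_iff) blast
    then show "g i = 0" by (simp add: g_def)
  qed
  from s2 have "g sums (z^a' / (1-z)^k + (\<Sum>i<a'-1. g i))" by (subst (asm) sums_iff_shift)
  with z0 have "g sums (z^a' / (1-z)^k)" by simp
  then show ?thesis by (simp only: g_def)
qed



lemma termD:
  fixes c :: real and n :: nat
  assumes c: "c > 0" and n: "n \<ge> 1"
  shows "((\<lambda>x. x^n * exp (-(c*x))) has_integral fact n / c^(Suc n)) {0<..}"
proof -
  define f where "f = (\<lambda>x::real. ennreal (x^n * exp (-x)) * indicator {0<..} x)"
  have fm: "f \<in> borel_measurable borel" unfolding f_def by measurable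
  have "(\<integral>\<^sup>+x. f x \<partial>lborel) = (\<integral>\<^sup>+x. ennreal (x^n * exp (-x)) * indicator {0..} x \<partial>lborel)"
    unfolding f_def using n by (intro nn_integral_cong) (auto split: split_indicator)
  also have "\<dots> = real_of_nat (fact n)" by (rule nn_intergal_power_times_exp_Ici)
  finally have I0: "(\<integral>\<^sup>+x. f x \<partial>lborel) = ennreal (fact n)" by (simp only: of_nat_fact)
  have "(\<integral>\<^sup>+x. f x \<partial>lborel) = ennreal \<bar>c\<bar> * (\<integral>\<^sup>+x. f (0 + c * x) \<partial>lborel)"
    by (rule nn_integral_real_affine[OF fm]) (use c in simp)
  also have "(\<lambda>x. f (0 + c * x)) = (\<lambda>x. ennreal (c^n) * (ennreal (x^n * exp (-(c*x))) * indicator {0<..} x))"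
    using c by (auto simp: f_def fun_eq_iff power_mult_distrib ennreal_mult' zero_less_mult_iff mult.assoc split: split_indicator)
  also have "(\<integral>\<^sup>+x. ennreal (c^n) * (ennreal (x^n * exp (-(c*x))) * indicator {0<..} x) \<partial>lborel)
     = ennreal (c^n) * (\<integral>\<^sup>+x. ennreal (x^n * exp (-(c*x))) * indicator {0<..} x \<partial>lborel)"
    by (rule nn_integral_cmult) measurable
  finally have E: "ennreal (fact n) = ennreal (c^Suc n) * (\<integral>\<^sup>+x. ennreal (x^n * exp (-(c*x))) * indicator {0<..} x \<partial>lborel)"
    using I0 c by (simp add: ennreal_mult' mult.assoc)
  define X where "X = (\<integral>\<^sup>+x. ennreal (x^n * exp (-(c*x))) * indicator {0<..} x \<partial>lborel)"
  have Cn: "ennreal (1/c^Suc n) * ennreal (c^Suc n) = 1" using c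
    by (subst ennreal_mult[symmetric]) auto
  have "X = (ennreal (1/c^Suc n) * ennreal (c^Suc n)) * X" by (simp only: Cn mult_1_left)
  also have "\<dots> = ennreal (1/c^Suc n) * ennreal (fact n)" using E unfolding X_def[symmetric] by (simp only: mult.assoc)
  also have "\<dots> = ennreal (fact n / c^Suc n)" using c
    by (subst ennreal_mult[symmetric]) auto
  finally have J: "(\<integral>\<^sup>+x. ennreal (x^n * exp (-(c*x))) * indicator {0<..} x \<partial>lborel) = ennreal (fact n / c^Suc n)"
    unfolding X_def .
  have "((\<lambda>x. indicator {0<..} x * (x^n * exp (-(c*x)))) has_integral fact n / c^Suc n) UNIV"
  proof (rule nn_integral_has_integral)
    show "(\<lambda>x. indicator {0<..} x * (x^n * exp (-(c*x)))) \<in> borel_measurable borel" by measurable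
    show "0 \<le> indicator {0<..} x * (x^n * exp (-(c*x)))" for x :: real by (simp split: split_indicator)
    show "(\<integral>\<^sup>+x. ennreal (indicator {0<..} x * (x^n * exp (-(c*x)))) \<partial>lborel) = ennreal (fact n / c^Suc n)"
      by (subst J[symmetric], intro nn_integral_cong) (simp add: ennreal_mult' mult.commute split: split_indicator)
    show "0 \<le> fact n / c^Suc n" using c by simp
  qed
  then have "((\<lambda>x. if x \<in> {0<..} then x^n * exp (-(c*x)) else 0) has_integral fact n / c^Suc n) UNIV"
    by (rule has_integral_eq[rotated]) (simp split: split_indicator)
  then show ?thesis by (simp only: has_integral_restrict_UNIV)
qed


lemma zeta_sums:
  fixes s :: nat assumes "s \<ge> 2"
  shows "(\<lambda>j. 1 / real (Suc j) powr real s) sums riemann_zeta (real s)"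
proof -
  have "summable (\<lambda>j. inverse (real j ^ s))" by (rule inverse_power_summable) (use assms in simp)
  then have "summable (\<lambda>j. inverse (real (Suc j) ^ s))" by (subst summable_Suc_iff)
  moreover have "(\<lambda>j. inverse (real (Suc j) ^ s)) = (\<lambda>j. 1 / real (Suc j) powr real s)"
    by (simp add: powr_realpow divide_inverse)
  ultimately have "summable (\<lambda>j. 1 / real (Suc j) powr real s)" by simp
  then show ?thesis unfolding riemann_zeta_def by (rule summable_sums)
qed

lemma P_nonneg:
  fixes k a' j :: nat assumes "1 \<le> a'" "a' \<le> k"
  shows "pochhammer (real (j+1) - real a' + 1) (k-1) / fact (k-1) \<ge> 0"
proof (cases "a' \<le> j + 1")
  case True
  then have "real (j+1) - real a' + 1 > 0" by simp
  then show ?thesis by (intro divide_nonneg_pos pochhammer_nonneg) auto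
next
  case False
  then have i: "j + 2 \<le> a'" by auto
  have "real (j+1) - real a' + 1 = - real (a' - 2 - j)" using i by simp
  moreover have "a' - 2 - j < k - 1" using i assms by simp
  ultimately have "pochhammer (real (j+1) - real a' + 1) (k-1) = 0"
    by (subst pochhammer_eq_0_iff) blast
  then show ?thesis by simp
qed

theorem mainTheorem2:
  fixes k n m :: nat
  assumes "k \<ge> 1" and "n \<ge> 1" and "n + 1 > k" and "k > m"
  shows "((\<lambda>x::real. (1 / fact n) * (x ^ n * exp (real m * x) / (exp x - 1) ^ k))
           has_integral
           (\<Sum>i = 0..k - 1. q_coeff k i (real k - real m) * riemann_zeta (real (n + 1 - i))))
         {0<..}"
proof -
  define a' where "a' = k - m"
  have a1: "1 \<le> a'" "a' \<le> k" using assms by (auto simp: a'_def)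
  have ra: "real k - real m = real a'" using assms by (simp add: a'_def of_nat_diff)
  define P where "P j = pochhammer (real (j+1) - real a' + 1) (k-1) / fact (k-1)" for j
  have Pnn: "P j \<ge> 0" for j unfolding P_def by (rule P_nonneg[OF a1])
  have Pq: "P j = (\<Sum>i = 0..k-1. q_coeff k i (real a') * real (Suc j) ^ i)" for j
    unfolding P_def using polyA[OF assms(1), of "real (j+1)" "real a'"] by simp
  define t where "t j x = (1 / fact n) * (P j * (x^n * exp (-(real (Suc j) * x))))" for j x
  define F where "F N x = (\<Sum>j<N. t j x)" for N x
  define RHS where "RHS = (\<Sum>i = 0..k - 1. q_coeff k i (real a') * riemann_zeta (real (n + 1 - i)))"
  have tint: "(t j has_integral P j / real (Suc j) ^ Suc n) {0<..}" for j
  proof -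
    have "((\<lambda>x. x^n * exp (-(real (Suc j) * x))) has_integral fact n / real (Suc j) ^ Suc n) {0<..}"
      by (rule termD) (use assms in auto)
    then have "((\<lambda>x. (1 / fact n) * (P j * (x^n * exp (-(real (Suc j) * x))))) has_integral
                 (1 / fact n) * (P j * (fact n / real (Suc j) ^ Suc n))) {0<..}"
      by (intro has_integral_mult_right)
    then show ?thesis unfolding t_def[abs_def] by simp
  qed
  have Fint: "(F N has_integral (\<Sum>j<N. P j / real (Suc j) ^ Suc n)) {0<..}" for N
    unfolding F_def[abs_def] by (rule has_integral_sum) (use tint in auto)
  have mono: "F N x \<le> F (Suc N) x" if "x \<in> {0<..}" for N x
  proof -
    have "t N x \<ge> 0" unfolding t_def using Pnn[of N] that by simp
    then show ?thesis unfolding F_def by simp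
  qed
  have lim: "(\<lambda>N. F N x) \<longlonglongrightarrow> (1 / fact n) * (x ^ n * exp (real m * x) / (exp x - 1) ^ k)"
    if "x \<in> {0<..}" for x
  proof -
    define z where "z = exp (-x)"
    have x: "x > 0" using that by simp
    have z: "0 < z" "z < 1" using x by (auto simp: z_def)
    have s: "(\<lambda>j. P j * z^(j+1)) sums (z^a' / (1-z)^k)"
      unfolding P_def by (rule seriesC[OF a1 z])
    have zj: "z^(j+1) = exp (-(real (Suc j) * x))" for j
      unfolding z_def by (simp add: algebra_simps flip: exp_of_nat_mult exp_add)
    have ex: "z^a' / (1-z)^k = exp (real m * x) / (exp x - 1) ^ k"
    proof -
      have e1: "z * exp x = 1" unfolding z_def by (simp add: exp_minus)
      have e2: "(1 - z) * exp x = exp x - 1" using e1 by (simp add: algebra_simps)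
      have km: "k = a' + m" using assms by (simp add: a'_def)
      have "z^a' * exp x ^ k = exp (real m * x)"
        unfolding km power_add mult.assoc[symmetric] power_mult_distrib[symmetric] e1
        by (simp flip: exp_of_nat_mult)
      moreover have "(1-z)^k * exp x ^ k = (exp x - 1)^k"
        by (simp only: power_mult_distrib[symmetric] e2)
      moreover have "exp x ^ k \<noteq> 0" by simp
      ultimately show ?thesis by (metis mult_divide_mult_cancel_right)
    qed
    have "(\<lambda>j. (1 / fact n * x^n) * (P j * z^(j+1))) sums ((1 / fact n * x^n) * (z^a' / (1-z)^k))"
      by (rule sums_mult[OF s])
    then have "(\<lambda>j. t j x) sums ((1 / fact n) * (x ^ n * exp (real m * x) / (exp x - 1) ^ k))"
      unfolding t_def zj ex by (simp add: mult_ac)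
    then show ?thesis unfolding F_def sums_def .
  qed
  have ser: "(\<lambda>j. P j / real (Suc j) ^ Suc n) sums RHS"
  proof -
    have "(\<lambda>j. \<Sum>i = 0..k-1. q_coeff k i (real a') * (1 / real (Suc j) powr real (n + 1 - i))) sums RHS"
      unfolding RHS_def
      by (intro sums_sum sums_mult zeta_sums) (use assms in auto)
    moreover have "P j / real (Suc j) ^ Suc n = (\<Sum>i = 0..k-1. q_coeff k i (real a') * (1 / real (Suc j) powr real (n + 1 - i)))" for j
    proof -
      have "P j / real (Suc j) ^ Suc n = (\<Sum>i = 0..k-1. q_coeff k i (real a') * (real (Suc j) ^ i / real (Suc j) ^ Suc n))"
        unfolding Pq by (simp add: sum_divide_distrib)
      also have "\<dots> = (\<Sum>i = 0..k-1. q_coeff k i (real a') * (1 / real (Suc j) powr real (n + 1 - i)))"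
      proof (intro sum.cong refl)
        fix i assume "i \<in> {0..k-1}"
        then have i: "i \<le> n" using assms by auto
        have "real (Suc j) ^ Suc n = real (Suc j) ^ i * real (Suc j) ^ (n + 1 - i)"
          using i by (simp flip: power_add)
        then show "q_coeff k i (real a') * (real (Suc j) ^ i / real (Suc j) ^ Suc n) = q_coeff k i (real a') * (1 / real (Suc j) powr real (n + 1 - i))"
          by (simp add: powr_realpow)
      qed
      finally show ?thesis .
    qed
    ultimately show ?thesis by simp
  qed
  have "((\<lambda>x::real. (1 / fact n) * (x ^ n * exp (real m * x) / (exp x - 1) ^ k)) has_integral RHS) {0<..}"
    by (rule has_integral_monotone_convergence_increasing[OF Fint mono lim])
       (use ser in \<open>simp_all add: sums_def\<close>)
  then show ?thesis unfolding RHS_def ra .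
qed

end
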